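(* For all processes $s,t$ of a PTS over $A_\tau=A\cup\{\tau\}$, the weak trace metric satisfies $\mathbf{d}^{\mathrm{w}}(s,t)=0$ if and only if $s$ and $t$ are weak probabilistic trace equivalent.
   Context: A PTS is $(\mathcal{S},A_\tau,\to)$ with $\mathcal{S}$ a countable set of processes, $A_\tau=A\cup\{\tau\}$ ($\tau\notin A$ the silent action), $\to\subseteq\mathcal{S}\times A_\tau\times\Delta(\mathcal{S})$ with $\Delta(\mathcal{S})$ the finitely supported distributions. Standing assumptions: processes are image-finite and finite. Computations $c=s_0\xrightarrow{a_1}s_1\cdots\xrightarrow{a_n}s_n$ use transitions $s_{i-1}\xrightarrow{a_i}\pi_i$ with $s_i\in\mathrm{supp}(\pi_i)$, $\Pr(c)=\prod_i\pi_i(s_i)$; $\mathrm{tr}(c)=a_1\cdots a_n\in A_\tau^\star$; maximal = not a proper prefix of another computation from the same process; $\mathcal{C}_{\max}(z,\alpha)$ = maximal computations from $z$ with trace $\alpha$. A resolution of $s$ is a PTS $\mathcal{Z}=(Z,A_\tau,\to_{\mathcal{Z}})$ with $\mathrm{corr}\colon Z\to\mathcal{S}$ and initial state $z_s$, $\mathrm{corr}(z_s)=s$, such that $z_s$ is in no target support, every other state is in the support of a target of a transition from a different state, every $z\xrightarrow{a}_{\mathcal{Z}}\pi$ is matched by $\mathrm{corr}(z)\xrightarrow{a}\pi'$ with $\pi(z')=\pi'(\mathrm{corr}(z'))$ for all $z'$, and each state has at most one outgoing transition; $\mathrm{res}(s)$ is the set of resolutions of $s$. Two traces $\alpha,\beta\in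 A_\tau^\star$ are equivalent, $\alpha\equiv\beta$, iff they coincide after deleting all occurrences of $\tau$. For $\alpha\in A^\star$, $\mathcal{C}^{\mathrm{w}}(s,\alpha)$ is the set of computations $c$ from $s$ with $\mathrm{tr}(c)\equiv\alpha$ that are not proper prefixes of another computation $c'$ from $s$ with $\mathrm{tr}(c')\equiv\alpha$. Processes $s,t$ are weak probabilistic trace equivalent iff for every $\mathcal{Z}_s\in\mathrm{res}(s)$ (initial state $z_s$) there is $\mathcal{Z}_t\in\mathrm{res}(t)$ (initial state $z_t$) with $\Pr(\mathcal{C}^{\mathrm{w}}(z_s,\alpha))=\Pr(\mathcal{C}^{\mathrm{w}}(z_t,\alpha))$ for all $\alpha\in A^\star$, and symmetrically with $s,t$ swapped. The trace distribution of a resolution is $TD_{\mathcal{Z}}(\alpha)=\Pr(\mathcal{C}_{\max}(z,\alpha))$, $\alpha\in A_\tau^\star$. Kantorovich lifting of a 1-bounded (pseudo)metric $d$ on $X$: $\mathcal{K}(d)(\pi,\pi')=\min_{\omega}\sum_{x,y}\omega(x,y)d(x,y)$ over couplings $\omega$ of $\pi,\pi'$. Hausdorff lifting: $\mathcal{H}(\hat d)(\Pi_1,\Pi_2)=\max\{\sup_{\pi_1\in\Pi_1}\inf_{\pi_2\in\Pi_2}\hat d(\pi_1,\pi_2),\sup_{\pi_2\in\Pi_2}\inf_{\pi_1\in\Pi_1}\hat d(\pi_2,\pi_1)\}$, with $\inf\emptyset=1,\sup\emptyset=0$. Let $d_{\mathrm{w}}(\alpha,\beta)=0$ if $\alpha\equiv\beta$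 and $1$ otherwise; $D_{\mathrm{w}}(\mathcal{Z}_1,\mathcal{Z}_2)=\mathcal{K}(d_{\mathrm{w}})(TD_{\mathcal{Z}_1},TD_{\mathcal{Z}_2})$; the weak trace metric is $\mathbf{d}^{\mathrm{w}}(s,t)=\mathcal{H}(D_{\mathrm{w}})(\mathrm{res}(s),\mathrm{res}(t))$. *)

theory Defs
  imports "HOL-Probability.Probability_Mass_Function" "HOL-Library.Sublist"
begin

datatype 'a act = Tau | Act 'a

text \<open>A PTS over the state type 's is given by its transition relation
  (source, action, target distribution).\<close>
type_synonym ('s, 'a) trans = "('s \<times> 'a act \<times> 's pmf) set"

text \<open>A computation from a state s0 is the list of its steps (a_i, pi_i, s_i).\<close>
type_synonym ('s, 'a) comp = "('a act \<times> 's pmf \<times> 's) list"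

fun valid_comp :: "('s, 'a) trans \<Rightarrow> 's \<Rightarrow> ('s, 'a) comp \<Rightarrow> bool" where
  "valid_comp T s [] = True"
| "valid_comp T s ((a, \<pi>, s') # r) = ((s, a, \<pi>) \<in> T \<and> s' \<in> set_pmf \<pi> \<and> valid_comp T s' r)"

definition comps :: "('s, 'a) trans \<Rightarrow> 's \<Rightarrow> ('s, 'a) comp set" where
  "comps T s = {c. valid_comp T s c}"

definition comp_prob :: "('s, 'a) comp \<Rightarrow> real" where
  "comp_prob c = prod_list (map (\<lambda>(a, \<pi>, s'). pmf \<pi> s') c)"

definition comps_prob :: "('s, 'a) comp set \<Rightarrow> real" where
  "comps_prob C = (\<Sum>c\<in>C. comp_prob c)"

definition tr :: "('s, 'a) comp \<Rightarrow> 'a act list" where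
  "tr c = map fst c"

text \<open>Visible part of a trace (delete all tau); alpha equiv beta iff vis alpha = vis beta.\<close>
fun vis :: "'a act list \<Rightarrow> 'a list" where
  "vis [] = []"
| "vis (Tau # r) = vis r"
| "vis (Act a # r) = a # vis r"

definition maximal_comp :: "('s, 'a) trans \<Rightarrow> 's \<Rightarrow> ('s, 'a) comp \<Rightarrow> bool" where
  "maximal_comp T s c \<longleftrightarrow> c \<in> comps T s \<and> \<not> (\<exists>c'\<in>comps T s. strict_prefix c c')"

definition Cmax :: "('s, 'a) trans \<Rightarrow> 's \<Rightarrow> 'a act list \<Rightarrow> ('s, 'a) comp set" where
  "Cmax T s \<alpha> = {c. maximal_comp T s c \<and> tr c = \<alpha>}"

definition Cw :: "('s, 'a) trans \<Rightarrow> 's \<Rightarrow> 'a list \<Rightarrow> ('s, 'a) comp set" where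
  "Cw T s \<alpha> = {c \<in> comps T s. vis (tr c) = \<alpha> \<and>
      \<not> (\<exists>c'\<in>comps T s. vis (tr c') = \<alpha> \<and> strict_prefix c c')}"

definition image_finite :: "('s, 'a) trans \<Rightarrow> 's \<Rightarrow> bool" where
  "image_finite T s \<longleftrightarrow> finite {(a, \<pi>). (s, a, \<pi>) \<in> T}"

definition finite_proc :: "('s, 'a) trans \<Rightarrow> 's \<Rightarrow> bool" where
  "finite_proc T s \<longleftrightarrow> (\<exists>N. \<forall>c\<in>comps T s. length c \<le> N)"

text \<open>Resolution states are taken from the countable type nat.\<close>
record ('s, 'a) resolution =
  zstates :: "nat set"
  ztrans :: "(nat, 'a) trans"
  zcorr :: "nat \<Rightarrow> 's"
  zinit :: nat

definition is_resolution :: "('s, 'a) trans \<Rightarrow> 's \<Rightarrow> ('s, 'a) resolution \<Rightarrow> bool" where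
  "is_resolution T s Z \<longleftrightarrow>
     zinit Z \<in> zstates Z \<and> zcorr Z (zinit Z) = s \<and>
     (\<forall>(z, a, \<pi>) \<in> ztrans Z. z \<in> zstates Z \<and> set_pmf \<pi> \<subseteq> zstates Z \<and> finite (set_pmf \<pi>)) \<and>
     (\<forall>(z, a, \<pi>) \<in> ztrans Z. zinit Z \<notin> set_pmf \<pi>) \<and>
     (\<forall>z \<in> zstates Z - {zinit Z}. \<exists>z' a \<pi>. (z', a, \<pi>) \<in> ztrans Z \<and> z' \<noteq> z \<and> z \<in> set_pmf \<pi>) \<and>
     (\<forall>(z, a, \<pi>) \<in> ztrans Z. \<exists>\<pi>'. (zcorr Z z, a, \<pi>') \<in> T \<and>
         (\<forall>z' \<in> zstates Z. pmf \<pi> z' = pmf \<pi>' (zcorr Z z'))) \<and>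
     (\<forall>z a1 \<pi>1 a2 \<pi>2. (z, a1, \<pi>1) \<in> ztrans Z \<longrightarrow> (z, a2, \<pi>2) \<in> ztrans Z \<longrightarrow>
         a1 = a2 \<and> \<pi>1 = \<pi>2)"

definition res :: "('s, 'a) trans \<Rightarrow> 's \<Rightarrow> ('s, 'a) resolution set" where
  "res T s = {Z. is_resolution T s Z}"

definition weak_trace_equiv :: "('s, 'a) trans \<Rightarrow> 's \<Rightarrow> 's \<Rightarrow> bool" where
  "weak_trace_equiv T s t \<longleftrightarrow>
     (\<forall>Zs\<in>res T s. \<exists>Zt\<in>res T t. \<forall>\<alpha>.
        comps_prob (Cw (ztrans Zs) (zinit Zs) \<alpha>) = comps_prob (Cw (ztrans Zt) (zinit Zt) \<alpha>)) \<and>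
     (\<forall>Zt\<in>res T t. \<exists>Zs\<in>res T s. \<forall>\<alpha>.
        comps_prob (Cw (ztrans Zt) (zinit Zt) \<alpha>) = comps_prob (Cw (ztrans Zs) (zinit Zs) \<alpha>))"

definition TD :: "('s, 'a) resolution \<Rightarrow> 'a act list \<Rightarrow> real" where
  "TD Z \<alpha> = comps_prob (Cmax (ztrans Z) (zinit Z) \<alpha>)"

definition is_coupling :: "('x \<Rightarrow> real) \<Rightarrow> ('x \<Rightarrow> real) \<Rightarrow> ('x \<times> 'x \<Rightarrow> real) \<Rightarrow> bool" where
  "is_coupling \<mu> \<nu> \<omega> \<longleftrightarrow>
     (\<forall>p. 0 \<le> \<omega> p) \<and> finite {p. \<omega> p \<noteq> 0} \<and>
     (\<forall>x. (\<Sum>y\<in>{y. \<omega> (x, y) \<noteq> 0}. \<omega> (x, y)) = \<mu> x) \<and>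
     (\<forall>y. (\<Sum>x\<in>{x. \<omega> (x, y) \<noteq> 0}. \<omega> (x, y)) = \<nu> y)"

definition kantorovich :: "('x \<Rightarrow> 'x \<Rightarrow> real) \<Rightarrow> ('x \<Rightarrow> real) \<Rightarrow> ('x \<Rightarrow> real) \<Rightarrow> real" where
  "kantorovich d \<mu> \<nu> =
     Inf {(\<Sum>p\<in>{p. \<omega> p \<noteq> 0}. \<omega> p * d (fst p) (snd p)) | \<omega>. is_coupling \<mu> \<nu> \<omega>}"

text \<open>Hausdorff lifting, with inf of empty = 1 and sup of empty = 0.\<close>
definition hausdorff :: "('x \<Rightarrow> 'x \<Rightarrow> real) \<Rightarrow> 'x set \<Rightarrow> 'x set \<Rightarrow> real" where
  "hausdorff D X Y =
     max (if X = {} then 0 else (SUP x\<in>X. if Y = {} then 1 else (INF y\<in>Y. D x y)))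
         (if Y = {} then 0 else (SUP y\<in>Y. if X = {} then 1 else (INF x\<in>X. D y x)))"

definition d_w :: "'a act list \<Rightarrow> 'a act list \<Rightarrow> real" where
  "d_w \<alpha> \<beta> = (if vis \<alpha> = vis \<beta> then 0 else 1)"

definition D_w :: "('s, 'a) resolution \<Rightarrow> ('s, 'a) resolution \<Rightarrow> real" where
  "D_w Z1 Z2 = kantorovich d_w (TD Z1) (TD Z2)"

definition weak_trace_metric :: "('s, 'a) trans \<Rightarrow> 's \<Rightarrow> 's \<Rightarrow> real" where
  "weak_trace_metric T s t = hausdorff D_w (res T s) (res T t)"

end

theory Submission
  imports Defs
begin


definition Mx :: "('z, 'a) trans \<Rightarrow> 'z \<Rightarrow> ('z, 'a) comp set" where
  "Mx R z = {c. maximal_comp R z c}"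

definition bounded :: "('z, 'a) trans \<Rightarrow> 'z \<Rightarrow> nat \<Rightarrow> bool" where
  "bounded R z n \<longleftrightarrow> (\<forall>c\<in>comps R z. length c \<le> n)"

lemma comp_prob_Cons[simp]: "comp_prob ((a, \<pi>, z') # d) = pmf \<pi> z' * comp_prob d"
  by (simp add: comp_prob_def)

lemma comp_prob_nonneg: "comp_prob c \<ge> 0"
  unfolding comp_prob_def by (induction c) auto

lemma tr_Cons[simp]: "tr ((a, \<pi>, z') # d) = a # tr d" by (simp add: tr_def)
lemma tr_Nil[simp]: "tr [] = []" by (simp add: tr_def)

lemma vis_Cons_gen: "vis (a # w) = vis [a] @ vis w"
  by (cases a) auto

lemma sum_cons_image:
  assumes "finite S" "\<And>z'. z' \<in> S \<Longrightarrow> finite (D z')"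
  shows "sum g {(a, \<pi>, z') # d | z' d. z' \<in> S \<and> d \<in> D z'} =
         (\<Sum>z'\<in>S. \<Sum>d\<in>D z'. g ((a, \<pi>, z') # d))"
proof -
  have eq: "{(a, \<pi>, z') # d | z' d. z' \<in> S \<and> d \<in> D z'} = (\<lambda>(z', d). (a, \<pi>, z') # d) ` Sigma S D"
    by auto
  have inj: "inj_on (\<lambda>(z', d). (a, \<pi>, z') # d) (Sigma S D)"
    by (auto simp: inj_on_def)
  have "(\<Sum>z'\<in>S. \<Sum>d\<in>D z'. g ((a, \<pi>, z') # d)) = (\<Sum>(z',d)\<in>Sigma S D. g ((a, \<pi>, z') # d))"
    by (rule sum.Sigma) (use assms in auto)
  moreover have "sum g ((\<lambda>(z', d). (a, \<pi>, z') # d) ` Sigma S D) = (\<Sum>(z',d)\<in>Sigma S D. g ((a, \<pi>, z') # d))"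
    unfolding sum.reindex[OF inj] by (rule sum.cong) auto
  ultimately show ?thesis unfolding eq by simp
qed

lemma sum_nonzero_eq:
  fixes g :: "'x \<Rightarrow> real"
  assumes "finite S" "{y. g y \<noteq> 0} \<subseteq> S"
  shows "sum g {y. g y \<noteq> 0} = sum g S"
  by (rule sum.mono_neutral_left) (use assms in auto)

locale detR =
  fixes R :: "('z, 'a) trans"
  assumes fs: "\<And>z a \<pi>. (z, a, \<pi>) \<in> R \<Longrightarrow> finite (set_pmf \<pi>)"
    and det: "\<And>z a1 \<pi>1 a2 \<pi>2. (z, a1, \<pi>1) \<in> R \<Longrightarrow> (z, a2, \<pi>2) \<in> R \<Longrightarrow> a1 = a2 \<and> \<pi>1 = \<pi>2"
begin

lemma comps_notrans:
  assumes "\<And>a \<pi>. (z, a, \<pi>) \<notin> R"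
  shows "comps R z = {[]}"
proof -
  have "valid_comp R z c \<longleftrightarrow> c = []" for c
    using assms by (cases c) auto
  thus ?thesis by (auto simp: comps_def)
qed

lemma comps_trans:
  assumes "(z, a, \<pi>) \<in> R"
  shows "comps R z = {[]} \<union> {(a, \<pi>, z') # d | z' d. z' \<in> set_pmf \<pi> \<and> d \<in> comps R z'}"
proof -
  have "valid_comp R z c \<longleftrightarrow> c = [] \<or> (\<exists>z' d. c = (a, \<pi>, z') # d \<and> z' \<in> set_pmf \<pi> \<and> valid_comp R z' d)" for c
  proof (cases c)
    case (Cons x d)
    then obtain b \<sigma> z' where x: "x = (b, \<sigma>, z')" by (cases x) auto
    have "(z, b, \<sigma>) \<in> R \<Longrightarrow> b = a \<and> \<sigma> = \<pi>" using det assms by blast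
    thus ?thesis using assms by (auto simp: Cons x)
  qed simp
  thus ?thesis unfolding comps_def by blast
qed

lemma Mx_notrans:
  assumes "\<And>a \<pi>. (z, a, \<pi>) \<notin> R"
  shows "Mx R z = {[]}"
  using comps_notrans[OF assms] by (auto simp: Mx_def maximal_comp_def)

lemma Mx_trans:
  assumes tr: "(z, a, \<pi>) \<in> R"
  shows "Mx R z = {(a, \<pi>, z') # d | z' d. z' \<in> set_pmf \<pi> \<and> d \<in> Mx R z'}"
proof (intro set_eqI iffI)
  fix c assume c: "c \<in> Mx R z"
  obtain z0 where z0: "z0 \<in> set_pmf \<pi>" using set_pmf_not_empty by fast
  have "[(a, \<pi>, z0)] \<in> comps R z" using comps_trans[OF tr] z0 by (auto simp: comps_def)
  hence "c \<noteq> []" using c by (auto simp: Mx_def maximal_comp_def)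
  with c comps_trans[OF tr] obtain z' d where cd: "c = (a, \<pi>, z') # d" "z' \<in> set_pmf \<pi>" "d \<in> comps R z'"
    by (auto simp: Mx_def maximal_comp_def)
  have "d \<in> Mx R z'"
  proof -
    { fix d' assume "d' \<in> comps R z'" "strict_prefix d d'"
      hence "(a, \<pi>, z') # d' \<in> comps R z" "strict_prefix c ((a, \<pi>, z') # d')"
        using comps_trans[OF tr] cd by auto
      hence False using c by (auto simp: Mx_def maximal_comp_def) }
    thus ?thesis using cd by (auto simp: Mx_def maximal_comp_def)
  qed
  thus "c \<in> {(a, \<pi>, z') # d | z' d. z' \<in> set_pmf \<pi> \<and> d \<in> Mx R z'}" using cd by auto
next
  fix c assume "c \<in> {(a, \<pi>, z') # d | z' d. z' \<in> set_pmf \<pi> \<and> d \<in> Mx R z'}"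
  then obtain z' d where cd: "c = (a, \<pi>, z') # d" "z' \<in> set_pmf \<pi>" "d \<in> Mx R z'" by auto
  have cc: "c \<in> comps R z" using cd comps_trans[OF tr] by (auto simp: Mx_def maximal_comp_def)
  { fix c' assume c': "c' \<in> comps R z" "strict_prefix c c'"
    then obtain d' where "c' = (a, \<pi>, z') # d'" "strict_prefix d d'"
      using cd by (cases c') auto
    moreover have "d' \<in> comps R z'" using c' calculation comps_trans[OF tr] by auto
    ultimately have False using cd by (auto simp: Mx_def maximal_comp_def) }
  thus "c \<in> Mx R z" using cc by (auto simp: Mx_def maximal_comp_def)
qed

lemma bounded_0:
  assumes "bounded R z 0" shows "(z, a, \<pi>) \<notin> R"
proof
  assume tr: "(z, a, \<pi>) \<in> R"
  obtain z0 where z0: "z0 \<in> set_pmf \<pi>" using set_pmf_not_empty by fast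
  have "[(a, \<pi>, z0)] \<in> comps R z" using comps_trans[OF tr] z0 by (auto simp: comps_def)
  thus False using assms by (auto simp: bounded_def)
qed

lemma bounded_Suc:
  assumes "bounded R z (Suc n)" "(z, a, \<pi>) \<in> R" "z' \<in> set_pmf \<pi>"
  shows "bounded R z' n"
  unfolding bounded_def
proof
  fix d assume "d \<in> comps R z'"
  hence "(a, \<pi>, z') # d \<in> comps R z" using comps_trans[OF assms(2)] assms(3) by auto
  thus "length d \<le> n" using assms(1) by (auto simp: bounded_def)
qed

lemma finite_comps: "bounded R z n \<Longrightarrow> finite (comps R z)"
proof (induction n arbitrary: z)
  case 0
  thus ?case using comps_notrans bounded_0 by (metis finite.simps)
next
  case (Suc n)
  show ?case
  proof (cases "\<exists>a \<pi>. (z, a, \<pi>) \<in> R")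
    case True
    then obtain a \<pi> where tr: "(z, a, \<pi>) \<in> R" by auto
    have "{(a, \<pi>, z') # d | z' d. z' \<in> set_pmf \<pi> \<and> d \<in> comps R z'} = (\<lambda>(z', d). (a, \<pi>, z') # d) ` Sigma (set_pmf \<pi>) (comps R)"
      by auto
    moreover have "finite (Sigma (set_pmf \<pi>) (comps R))"
      using fs[OF tr] Suc.IH bounded_Suc[OF Suc.prems tr] by auto
    ultimately show ?thesis unfolding comps_trans[OF tr] by simp
  next
    case False thus ?thesis using comps_notrans by (metis finite.simps)
  qed
qed

lemma finite_Mx: "bounded R z n \<Longrightarrow> finite (Mx R z)"
  using finite_comps by (rule finite_subset[rotated]) (auto simp: Mx_def maximal_comp_def)

end


fun visa :: "'a act \<Rightarrow> 'a list" where
  "visa Tau = []" | "visa (Act x) = [x]"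

lemma vis_Cons_visa: "vis (a # w) = visa a @ vis w"
  by (cases a) auto

context detR begin

lemma bounded_step:
  assumes "bounded R z n" "(z, a, \<pi>) \<in> R" "z' \<in> set_pmf \<pi>"
  shows "bounded R z' n"
  unfolding bounded_def
proof
  fix d assume "d \<in> comps R z'"
  hence "(a, \<pi>, z') # d \<in> comps R z" using comps_trans[OF assms(2)] assms(3) by auto
  thus "length d \<le> n" using assms(1) by (fastforce simp: bounded_def)
qed

lemma sum_Mx_trans:
  assumes tr: "(z, a, \<pi>) \<in> R" and b: "bounded R z n"
  shows "comps_prob {c \<in> Mx R z. P c} =
     (\<Sum>z'\<in>set_pmf \<pi>. pmf \<pi> z' * comps_prob {d \<in> Mx R z'. P ((a, \<pi>, z') # d)})"
proof -
  have eq: "{c \<in> Mx R z. P c} = {(a, \<pi>, z') # d | z' d. z' \<in> set_pmf \<pi> \<and> d \<in> {d \<in> Mx R z'. P ((a, \<pi>, z') # d)}}"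
    by (subst Mx_trans[OF tr]) auto
  have fin: "finite {d \<in> Mx R z'. P ((a, \<pi>, z') # d)}" if "z' \<in> set_pmf \<pi>" for z'
    using finite_Mx[OF bounded_step[OF b tr that]] by simp
  show ?thesis unfolding comps_prob_def eq
    by (subst sum_cons_image[OF fs[OF tr] fin]) (simp_all add: sum_distrib_left)
qed

lemma total_Mx: "bounded R z n \<Longrightarrow> comps_prob (Mx R z) = 1"
proof (induction n arbitrary: z)
  case 0
  have "Mx R z = {[]}" by (rule Mx_notrans) (rule bounded_0[OF 0])
  thus ?case by (simp add: comps_prob_def comp_prob_def)
next
  case (Suc n)
  show ?case
  proof (cases "\<exists>a \<pi>. (z, a, \<pi>) \<in> R")
    case True
    then obtain a \<pi> where tr: "(z, a, \<pi>) \<in> R" by auto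
    have "comps_prob (Mx R z) = comps_prob {c \<in> Mx R z. True}" by simp
    also have "\<dots> = (\<Sum>z'\<in>set_pmf \<pi>. pmf \<pi> z' * comps_prob {d \<in> Mx R z'. True})"
      by (rule sum_Mx_trans[OF tr Suc.prems])
    also have "\<dots> = (\<Sum>z'\<in>set_pmf \<pi>. pmf \<pi> z')"
      by (rule sum.cong) (use Suc.IH bounded_Suc[OF Suc.prems tr] in auto)
    also have "\<dots> = 1" by (rule sum_pmf_eq_1) (use fs[OF tr] in auto)
    finally show ?thesis .
  next
    case False
    hence "Mx R z = {[]}" by (intro Mx_notrans) blast
    thus ?thesis by (simp add: comps_prob_def comp_prob_def)
  qed
qed

lemma Cw_notrans:
  assumes "\<And>a \<pi>. (z, a, \<pi>) \<notin> R"
  shows "Cw R z \<beta> = (if \<beta> = [] then {[]} else {})"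
  unfolding Cw_def comps_notrans[OF assms] by (cases \<beta>) auto

lemma Cw_mem: "c \<in> Cw R z \<beta> \<longleftrightarrow> c \<in> comps R z \<and> vis (tr c) = \<beta> \<and>
   (\<forall>c'. c' \<in> comps R z \<longrightarrow> vis (tr c') = \<beta> \<longrightarrow> \<not> strict_prefix c c')"
  unfolding Cw_def by blast

lemma comps_Cons:
  assumes tr: "(z, a, \<pi>) \<in> R"
  shows "x # d \<in> comps R z \<longleftrightarrow> (\<exists>z'. x = (a, \<pi>, z') \<and> z' \<in> set_pmf \<pi> \<and> d \<in> comps R z')"
proof -
  obtain b \<sigma> z' where x: "x = (b, \<sigma>, z')" by (cases x) auto
  have "(z, b, \<sigma>) \<in> R \<Longrightarrow> b = a \<and> \<sigma> = \<pi>" using det tr by blast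
  thus ?thesis using tr by (auto simp: x comps_def)
qed

lemma Cw_trans:
  assumes tr: "(z, a, \<pi>) \<in> R"
  shows "Cw R z \<beta> = (if \<beta> = [] \<and> a \<noteq> Tau then {[]} else {}) \<union>
     {(a, \<pi>, z') # d | z' d. z' \<in> set_pmf \<pi> \<and> d \<in> {d. \<exists>\<beta>'. \<beta> = visa a @ \<beta>' \<and> d \<in> Cw R z' \<beta>'}}"
proof (intro set_eqI iffI)
  fix c assume c: "c \<in> Cw R z \<beta>"
  hence cc: "c \<in> comps R z" and cv: "vis (tr c) = \<beta>"
    and cm: "\<And>c'. c' \<in> comps R z \<Longrightarrow> vis (tr c') = \<beta> \<Longrightarrow> \<not> strict_prefix c c'"
    unfolding Cw_mem by blast+
  show "c \<in> (if \<beta> = [] \<and> a \<noteq> Tau then {[]} else {}) \<union>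
     {(a, \<pi>, z') # d | z' d. z' \<in> set_pmf \<pi> \<and> d \<in> {d. \<exists>\<beta>'. \<beta> = visa a @ \<beta>' \<and> d \<in> Cw R z' \<beta>'}}"
  proof (cases c)
    case Nil
    have "a \<noteq> Tau"
    proof
      assume aT: "a = Tau"
      obtain z0 where z0: "z0 \<in> set_pmf \<pi>" using set_pmf_not_empty by fast
      have "[(a, \<pi>, z0)] \<in> comps R z" using tr z0 by (simp add: comps_def)
      moreover have "vis (tr [(a, \<pi>, z0)]) = \<beta>" using cv Nil aT by simp
      ultimately show False using cm[of "[(a, \<pi>, z0)]"] Nil by simp
    qed
    thus ?thesis using Nil cv by simp
  next
    case (Cons x d)
    with cc comps_Cons[OF tr] obtain z' where x: "x = (a, \<pi>, z')" and z': "z' \<in> set_pmf \<pi>"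
      and d: "d \<in> comps R z'" by blast
    have "d \<in> Cw R z' (vis (tr d))"
      unfolding Cw_mem
    proof (intro conjI allI impI d refl notI)
      fix d' assume d': "d' \<in> comps R z'" "vis (tr d') = vis (tr d)" "strict_prefix d d'"
      have "(a, \<pi>, z') # d' \<in> comps R z" using comps_Cons[OF tr] z' d'(1) by blast
      moreover have "vis (tr ((a, \<pi>, z') # d')) = \<beta>"
        using cv d'(2) unfolding Cons x tr_Cons by (simp only: vis_Cons_visa)
      moreover have "strict_prefix c ((a, \<pi>, z') # d')" using d'(3) Cons x by simp
      ultimately show False using cm by blast
    qed
    moreover have "\<beta> = visa a @ vis (tr d)" using cv unfolding Cons x tr_Cons by (simp only: vis_Cons_visa)
    ultimately show ?thesis using Cons x z' by blast
  qed
next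
  fix c assume "c \<in> (if \<beta> = [] \<and> a \<noteq> Tau then {[]} else {}) \<union>
     {(a, \<pi>, z') # d | z' d. z' \<in> set_pmf \<pi> \<and> d \<in> {d. \<exists>\<beta>'. \<beta> = visa a @ \<beta>' \<and> d \<in> Cw R z' \<beta>'}}"
  hence "(c = [] \<and> \<beta> = [] \<and> a \<noteq> Tau) \<or>
    (\<exists>z' d \<beta>'. c = (a, \<pi>, z') # d \<and> z' \<in> set_pmf \<pi> \<and> \<beta> = visa a @ \<beta>' \<and> d \<in> Cw R z' \<beta>')"
  proof (elim UnE)
    assume "c \<in> (if \<beta> = [] \<and> a \<noteq> Tau then {[]} else {})"
    thus ?thesis by (simp split: if_splits)
  qed blast
  thus "c \<in> Cw R z \<beta>"
  proof (elim disjE exE conjE)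
    assume 1: "c = []" "\<beta> = []" "a \<noteq> Tau"
    show ?thesis unfolding Cw_mem
    proof (intro conjI allI impI notI)
      show "c \<in> comps R z" using 1 by (simp add: comps_def)
      show "vis (tr c) = \<beta>" using 1 by simp
      fix c' assume c': "c' \<in> comps R z" "vis (tr c') = \<beta>" "strict_prefix c c'"
      then obtain x d' where c'x: "c' = x # d'" using 1 by (cases c') auto
      with c' comps_Cons[OF tr] obtain z' where "x = (a, \<pi>, z')" by blast
      hence "vis (tr c') \<noteq> []" using 1 c'x by (cases a) auto
      thus False using c' 1 by simp
    qed
  next
    fix z' d \<beta>' assume 2: "c = (a, \<pi>, z') # d" "z' \<in> set_pmf \<pi>" "\<beta> = visa a @ \<beta>'" "d \<in> Cw R z' \<beta>'"
    hence dc: "d \<in> comps R z'" and dv: "vis (tr d) = \<beta>'"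
      and dm: "\<And>d'. d' \<in> comps R z' \<Longrightarrow> vis (tr d') = \<beta>' \<Longrightarrow> \<not> strict_prefix d d'"
      unfolding Cw_mem by blast+
    show ?thesis unfolding Cw_mem
    proof (intro conjI allI impI notI)
      show "c \<in> comps R z" using 2 dc comps_Cons[OF tr] by blast
      show "vis (tr c) = \<beta>" using 2 dv by (simp only: tr_Cons vis_Cons_visa)
      fix c' assume c': "c' \<in> comps R z" "vis (tr c') = \<beta>" "strict_prefix c c'"
      then obtain x d' where c'x: "c' = x # d'" using 2 by (cases c') auto
      with c' comps_Cons[OF tr] obtain z'' where x: "x = (a, \<pi>, z'')" "d' \<in> comps R z''" by blast
      have "z'' = z'" "strict_prefix d d'" using c'(3) 2(1) c'x x by auto
      moreover have "vis (tr d') = \<beta>'" using c'(2) 2(3) unfolding c'x x tr_Cons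
        by (simp only: vis_Cons_visa) simp
      ultimately show False using dm x by blast
    qed
  qed
qed

definition Gz :: "'z \<Rightarrow> 'a list \<Rightarrow> real" where
  "Gz z \<beta> = comps_prob {c \<in> Mx R z. prefix \<beta> (vis (tr c))}"

lemma Cw_eq_G: "bounded R z n \<Longrightarrow> comps_prob (Cw R z \<beta>) = Gz z \<beta>"
proof (induction n arbitrary: z \<beta>)
  case 0
  have "Mx R z = {[]}" by (rule Mx_notrans) (rule bounded_0[OF 0])
  moreover have "Cw R z \<beta> = (if \<beta> = [] then {[]} else {})" by (rule Cw_notrans) (rule bounded_0[OF 0])
  ultimately show ?case by (simp add: comps_prob_def comp_prob_def Gz_def)
next
  case (Suc n)
  show ?case
  proof (cases "\<exists>a \<pi>. (z, a, \<pi>) \<in> R")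
    case False
    hence "Mx R z = {[]}" by (intro Mx_notrans) blast
    moreover have "Cw R z \<beta> = (if \<beta> = [] then {[]} else {})" using False by (intro Cw_notrans) blast
    ultimately show ?thesis by (simp add: comps_prob_def comp_prob_def Gz_def)
  next
    case True
    then obtain a \<pi> where tr: "(z, a, \<pi>) \<in> R" by auto
    define D where "D z' = {d. \<exists>\<beta>'. \<beta> = visa a @ \<beta>' \<and> d \<in> Cw R z' \<beta>'}" for z'
    have bz: "bounded R z' n" if "z' \<in> set_pmf \<pi>" for z' using bounded_Suc[OF Suc.prems tr that] .
    have finD: "finite (D z')" if "z' \<in> set_pmf \<pi>" for z'
      by (rule finite_subset[OF _ finite_comps[OF bz[OF that]]]) (auto simp: D_def Cw_def)
    have disj: "(if \<beta> = [] \<and> a \<noteq> Tau then {[]} else {}) \<inter> {(a, \<pi>, z') # d | z' d. z' \<in> set_pmf \<pi> \<and> d \<in> D z'} = {}"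
      by auto
    have fin2: "finite {(a, \<pi>, z') # d | z' d. z' \<in> set_pmf \<pi> \<and> d \<in> D z'}"
    proof -
      have "{(a, \<pi>, z') # d | z' d. z' \<in> set_pmf \<pi> \<and> d \<in> D z'} = (\<lambda>(z', d). (a, \<pi>, z') # d) ` Sigma (set_pmf \<pi>) D"
        by auto
      thus ?thesis using fs[OF tr] finD by auto
    qed
    have L: "comps_prob (Cw R z \<beta>) = (if \<beta> = [] \<and> a \<noteq> Tau then 1 else 0) +
        (\<Sum>z'\<in>set_pmf \<pi>. pmf \<pi> z' * comps_prob (D z'))"
      unfolding Cw_trans[OF tr] D_def[symmetric] comps_prob_def
      apply (subst sum.union_disjoint[OF _ fin2 disj])
       apply simp
      apply (subst sum_cons_image[OF fs[OF tr] finD])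
       apply assumption
      apply (simp add: sum_distrib_left comp_prob_def)
      done
    have Rr: "Gz z \<beta> = (\<Sum>z'\<in>set_pmf \<pi>. pmf \<pi> z' * comps_prob {d \<in> Mx R z'. prefix \<beta> (vis (tr ((a, \<pi>, z') # d)))})"
      unfolding Gz_def by (rule sum_Mx_trans[OF tr Suc.prems])
    show ?thesis
    proof (cases a)
      case Tau
      have "D z' = Cw R z' \<beta>" for z' by (simp add: D_def Tau)
      thus ?thesis unfolding L Rr using Suc.IH[OF bz] by (simp add: Tau Gz_def)
    next
      case (Act x)
      show ?thesis
      proof (cases \<beta>)
        case Nil
        have "D z' = {}" for z' by (simp add: D_def Act Nil)
        hence "comps_prob (Cw R z \<beta>) = 1" unfolding L by (simp add: Act Nil comps_prob_def)
        moreover have "Gz z \<beta> = (\<Sum>z'\<in>set_pmf \<pi>. pmf \<pi> z')"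
          unfolding Rr by (rule sum.cong[OF refl]) (simp add: Nil total_Mx[OF bz])
        moreover have "(\<Sum>z'\<in>set_pmf \<pi>. pmf \<pi> z') = 1" by (rule sum_pmf_eq_1) (use fs[OF tr] in auto)
        ultimately show ?thesis by simp
      next
        case (Cons y \<beta>')
        have "D z' = (if y = x then Cw R z' \<beta>' else {})" for z' by (auto simp: D_def Act Cons)
        thus ?thesis unfolding L Rr using Suc.IH[OF bz]
          by (auto simp: Act Cons Gz_def comps_prob_def intro!: sum.cong)
      qed
    qed
  qed
qed

end


lemma prefix_snoc_iff: "prefix (\<beta> @ [a]) \<gamma> \<longleftrightarrow> strict_prefix \<beta> \<gamma> \<and> a = \<gamma> ! length \<beta>"
proof
  assume "prefix (\<beta> @ [a]) \<gamma>"
  then obtain r where "\<gamma> = \<beta> @ a # r" by (auto elim!: prefixE)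
  thus "strict_prefix \<beta> \<gamma> \<and> a = \<gamma> ! length \<beta>" by (auto intro: strict_prefixI')
next
  assume "strict_prefix \<beta> \<gamma> \<and> a = \<gamma> ! length \<beta>"
  then obtain x r where "\<gamma> = \<beta> @ x # r" "a = \<gamma> ! length \<beta>" by (auto elim!: strict_prefixE')
  thus "prefix (\<beta> @ [a]) \<gamma>" by auto
qed

lemma prefix_inv:
  fixes V :: "'x list \<Rightarrow> real"
  assumes S: "finite S" and L: "finite L" and SL: "\<And>\<gamma>. \<gamma> \<in> S \<Longrightarrow> set \<gamma> \<subseteq> L"
  shows "(\<Sum>\<gamma>\<in>{\<gamma>\<in>S. \<gamma> = \<beta>}. V \<gamma>) =
     (\<Sum>\<gamma>\<in>{\<gamma>\<in>S. prefix \<beta> \<gamma>}. V \<gamma>) - (\<Sum>a\<in>L. \<Sum>\<gamma>\<in>{\<gamma>\<in>S. prefix (\<beta> @ [a]) \<gamma>}. V \<gamma>)"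
proof -
  have split: "{\<gamma>\<in>S. prefix \<beta> \<gamma>} = {\<gamma>\<in>S. \<gamma> = \<beta>} \<union> {\<gamma>\<in>S. strict_prefix \<beta> \<gamma>}"
    by (auto simp: strict_prefix_def)
  have disj: "{\<gamma>\<in>S. \<gamma> = \<beta>} \<inter> {\<gamma>\<in>S. strict_prefix \<beta> \<gamma>} = {}" by auto
  have "(\<Sum>a\<in>L. \<Sum>\<gamma>\<in>{\<gamma>\<in>S. prefix (\<beta> @ [a]) \<gamma>}. V \<gamma>) =
        (\<Sum>\<gamma>\<in>S. \<Sum>a\<in>{a\<in>L. prefix (\<beta> @ [a]) \<gamma>}. V \<gamma>)"
    using sum.swap_restrict[OF L S, of "\<lambda>a \<gamma>. V \<gamma>" "\<lambda>a \<gamma>. prefix (\<beta> @ [a]) \<gamma>"] by simp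
  also have "\<dots> = (\<Sum>\<gamma>\<in>S. if strict_prefix \<beta> \<gamma> then V \<gamma> else 0)"
  proof (rule sum.cong[OF refl])
    fix \<gamma> assume g: "\<gamma> \<in> S"
    show "(\<Sum>a\<in>{a\<in>L. prefix (\<beta> @ [a]) \<gamma>}. V \<gamma>) = (if strict_prefix \<beta> \<gamma> then V \<gamma> else 0)"
    proof (cases "strict_prefix \<beta> \<gamma>")
      case True
      hence "length \<beta> < length \<gamma>" by (rule prefix_length_less)
      hence "\<gamma> ! length \<beta> \<in> L" using SL[OF g] by (meson nth_mem subsetD)
      hence "{a\<in>L. prefix (\<beta> @ [a]) \<gamma>} = {\<gamma> ! length \<beta>}" using True by (auto simp: prefix_snoc_iff)
      thus ?thesis using True by simp
    next
      case False
      hence E: "{a\<in>L. prefix (\<beta> @ [a]) \<gamma>} = {}" by (auto simp: prefix_snoc_iff)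
      show ?thesis unfolding E using False by simp
    qed
  qed
  also have "\<dots> = (\<Sum>\<gamma>\<in>{\<gamma>\<in>S. strict_prefix \<beta> \<gamma>}. V \<gamma>)"
    by (simp add: sum.inter_filter[OF S])
  finally have X: "(\<Sum>a\<in>L. \<Sum>\<gamma>\<in>{\<gamma>\<in>S. prefix (\<beta> @ [a]) \<gamma>}. V \<gamma>) = (\<Sum>\<gamma>\<in>{\<gamma>\<in>S. strict_prefix \<beta> \<gamma>}. V \<gamma>)" .
  have U: "sum V {\<gamma>\<in>S. prefix \<beta> \<gamma>} = sum V {\<gamma>\<in>S. \<gamma> = \<beta>} + sum V {\<gamma>\<in>S. strict_prefix \<beta> \<gamma>}"
    unfolding split by (rule sum.union_disjoint) (use S disj in auto)
  show ?thesis using X U by linarith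
qed

definition cost :: "('x \<Rightarrow> 'x \<Rightarrow> real) \<Rightarrow> ('x \<times> 'x \<Rightarrow> real) \<Rightarrow> real" where
  "cost d \<omega> = (\<Sum>p\<in>{p. \<omega> p \<noteq> 0}. \<omega> p * d (fst p) (snd p))"

lemma kantorovich_cost: "kantorovich d \<mu> \<nu> = Inf {cost d \<omega> | \<omega>. is_coupling \<mu> \<nu> \<omega>}"
  by (simp add: kantorovich_def cost_def)

lemma marg_fst:
  fixes \<mu> :: "'x \<Rightarrow> real"
  assumes c: "is_coupling \<mu> \<nu> \<omega>" and Sm: "finite Sm" "\<And>x. x \<notin> Sm \<Longrightarrow> \<mu> x = 0"
  shows "(\<Sum>x\<in>{x\<in>Sm. P x}. \<mu> x) = (\<Sum>p\<in>{p. \<omega> p \<noteq> 0 \<and> P (fst p)}. \<omega> p)"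
proof -
  let ?W = "{p. \<omega> p \<noteq> 0}"
  have W: "finite ?W" and nn: "\<And>p. \<omega> p \<ge> 0"
    and mx: "\<And>x. (\<Sum>y\<in>{y. \<omega> (x, y) \<noteq> 0}. \<omega> (x, y)) = \<mu> x"
    using c by (auto simp: is_coupling_def)
  have finB: "finite {y. \<omega> (x, y) \<noteq> 0}" for x
    by (rule finite_subset[of _ "snd ` ?W"]) (use W in force)+
  have inSm: "fst p \<in> Sm" if "\<omega> p \<noteq> 0" for p
  proof (rule ccontr)
    assume "fst p \<notin> Sm"
    hence "\<mu> (fst p) = 0" using Sm by auto
    moreover have "\<omega> p \<le> (\<Sum>y\<in>{y. \<omega> (fst p, y) \<noteq> 0}. \<omega> (fst p, y))"
      using member_le_sum[of "snd p" "{y. \<omega> (fst p, y) \<noteq> 0}" "\<lambda>y. \<omega> (fst p, y)"] that nn finB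
      by (cases p) auto
    ultimately show False using mx[of "fst p"] that nn[of p] by linarith
  qed
  have "(\<Sum>x\<in>{x\<in>Sm. P x}. \<mu> x) = (\<Sum>x\<in>{x\<in>Sm. P x}. \<Sum>y\<in>{y. \<omega> (x, y) \<noteq> 0}. \<omega> (x, y))"
    by (simp add: mx)
  also have "\<dots> = (\<Sum>p\<in>Sigma {x\<in>Sm. P x} (\<lambda>x. {y. \<omega> (x, y) \<noteq> 0}). \<omega> p)"
    by (subst sum.Sigma) (use Sm finB in auto)
  also have "Sigma {x\<in>Sm. P x} (\<lambda>x. {y. \<omega> (x, y) \<noteq> 0}) = {p. \<omega> p \<noteq> 0 \<and> P (fst p)}"
    using inSm by force
  finally show ?thesis .
qed

lemma marg_snd:
  fixes \<nu> :: "'x \<Rightarrow> real"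
  assumes c: "is_coupling \<mu> \<nu> \<omega>" and Sn: "finite Sn" "\<And>x. x \<notin> Sn \<Longrightarrow> \<nu> x = 0"
  shows "(\<Sum>x\<in>{x\<in>Sn. P x}. \<nu> x) = (\<Sum>p\<in>{p. \<omega> p \<noteq> 0 \<and> P (snd p)}. \<omega> p)"
proof -
  let ?W = "{p. \<omega> p \<noteq> 0}"
  have W: "finite ?W" and nn: "\<And>p. \<omega> p \<ge> 0"
    and mx: "\<And>y. (\<Sum>x\<in>{x. \<omega> (x, y) \<noteq> 0}. \<omega> (x, y)) = \<nu> y"
    using c by (auto simp: is_coupling_def)
  have finB: "finite {x. \<omega> (x, y) \<noteq> 0}" for y
    by (rule finite_subset[of _ "fst ` ?W"]) (use W in force)+
  have inSn: "snd p \<in> Sn" if "\<omega> p \<noteq> 0" for p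
  proof (rule ccontr)
    assume "snd p \<notin> Sn"
    hence "\<nu> (snd p) = 0" using Sn by auto
    moreover have "\<omega> p \<le> (\<Sum>x\<in>{x. \<omega> (x, snd p) \<noteq> 0}. \<omega> (x, snd p))"
      using member_le_sum[of "fst p" "{x. \<omega> (x, snd p) \<noteq> 0}" "\<lambda>x. \<omega> (x, snd p)"] that nn finB
      by (cases p) auto
    ultimately show False using mx[of "snd p"] that nn[of p] by linarith
  qed
  have "(\<Sum>x\<in>{x\<in>Sn. P x}. \<nu> x) = (\<Sum>y\<in>{y\<in>Sn. P y}. \<Sum>x\<in>{x. \<omega> (x, y) \<noteq> 0}. \<omega> (x, y))"
    by (simp add: mx)
  also have "\<dots> = (\<Sum>p\<in>Sigma {y\<in>Sn. P y} (\<lambda>y. {x. \<omega> (x, y) \<noteq> 0}). \<omega> (snd p, fst p))"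
    by (subst sum.Sigma) (use Sn finB in \<open>auto simp: split_def\<close>)
  also have "\<dots> = (\<Sum>p\<in>prod.swap ` Sigma {y\<in>Sn. P y} (\<lambda>y. {x. \<omega> (x, y) \<noteq> 0}). \<omega> p)"
    by (subst sum.reindex) (auto simp: comp_def prod.swap_def intro!: sum.cong)
  also have "prod.swap ` Sigma {y\<in>Sn. P y} (\<lambda>y. {x. \<omega> (x, y) \<noteq> 0}) = {p. \<omega> p \<noteq> 0 \<and> P (snd p)}"
    using inSn by force
  finally show ?thesis .
qed


locale twodist =
  fixes \<mu> \<nu> :: "'x \<Rightarrow> real" and Sm Sn :: "'x set"
  assumes Sm: "finite Sm" "\<And>x. x \<notin> Sm \<Longrightarrow> \<mu> x = 0"
    and Sn: "finite Sn" "\<And>x. x \<notin> Sn \<Longrightarrow> \<nu> x = 0"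
    and mnn: "\<And>x. \<mu> x \<ge> 0" and nnn: "\<And>x. \<nu> x \<ge> 0"
    and m1: "sum \<mu> Sm = 1" and n1: "sum \<nu> Sn = 1"
begin

lemma smI: "\<mu> x \<noteq> 0 \<Longrightarrow> x \<in> Sm" using Sm(2) by blast
lemma snI: "\<nu> x \<noteq> 0 \<Longrightarrow> x \<in> Sn" using Sn(2) by blast

lemma prod_coupling: "is_coupling \<mu> \<nu> (\<lambda>p. \<mu> (fst p) * \<nu> (snd p))"
proof -
  have fin: "finite {p. \<mu> (fst p) * \<nu> (snd p) \<noteq> 0}"
    by (rule finite_subset[of _ "Sm \<times> Sn"]) (use Sm Sn in \<open>auto intro: smI snI\<close>)
  have a: "(\<Sum>y\<in>{y. \<mu> x * \<nu> y \<noteq> 0}. \<mu> x * \<nu> y) = \<mu> x" for x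
  proof -
    have "(\<Sum>y\<in>{y. \<mu> x * \<nu> y \<noteq> 0}. \<mu> x * \<nu> y) = (\<Sum>y\<in>Sn. \<mu> x * \<nu> y)"
      by (rule sum_nonzero_eq[where g="\<lambda>y. \<mu> x * \<nu> y"]) (use Sn in auto)
    also have "\<dots> = \<mu> x" by (simp add: sum_distrib_left[symmetric] n1)
    finally show ?thesis .
  qed
  have b: "(\<Sum>x\<in>{x. \<mu> x * \<nu> y \<noteq> 0}. \<mu> x * \<nu> y) = \<nu> y" for y
  proof -
    have "(\<Sum>x\<in>{x. \<mu> x * \<nu> y \<noteq> 0}. \<mu> x * \<nu> y) = (\<Sum>x\<in>Sm. \<mu> x * \<nu> y)"
      by (rule sum_nonzero_eq[where g="\<lambda>x. \<mu> x * \<nu> y"]) (use Sm in auto)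
    also have "\<dots> = \<nu> y" by (simp add: sum_distrib_right[symmetric] m1)
    finally show ?thesis .
  qed
  show ?thesis unfolding is_coupling_def using fin a b mnn nnn by simp
qed

lemma cost_nonneg:
  assumes "is_coupling \<mu> \<nu> \<omega>" "\<And>x y. d x y \<ge> 0"
  shows "cost d \<omega> \<ge> 0"
  using assms unfolding cost_def is_coupling_def by (auto intro!: sum_nonneg)

lemma kant_nonneg:
  assumes "\<And>x y. d x y \<ge> 0"
  shows "kantorovich d \<mu> \<nu> \<ge> 0"
  unfolding kantorovich_cost
  by (rule cInf_greatest) (use prod_coupling cost_nonneg[OF _ assms] in auto)

context
  fixes \<phi> :: "'x \<Rightarrow> 'y"
begin

definition dphi :: "'x \<Rightarrow> 'x \<Rightarrow> real" where
  "dphi x y = (if \<phi> x = \<phi> y then 0 else 1)"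

definition mm :: "'y \<Rightarrow> real" where "mm y = (\<Sum>x\<in>{x\<in>Sm. \<phi> x = y}. \<mu> x)"
definition nn :: "'y \<Rightarrow> real" where "nn y = (\<Sum>x\<in>{x\<in>Sn. \<phi> x = y}. \<nu> x)"

lemma dphi_nonneg: "dphi x y \<ge> 0" by (simp add: dphi_def)

lemma diff_le_cost:
  assumes c: "is_coupling \<mu> \<nu> \<omega>"
  shows "mm y0 - nn y0 \<le> cost dphi \<omega>" "nn y0 - mm y0 \<le> cost dphi \<omega>"
proof -
  let ?W = "{p. \<omega> p \<noteq> 0}"
  have W: "finite ?W" and onn: "\<And>p. \<omega> p \<ge> 0" using c by (auto simp: is_coupling_def)
  have M: "mm y0 = (\<Sum>p\<in>{p. \<omega> p \<noteq> 0 \<and> \<phi> (fst p) = y0}. \<omega> p)"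
    unfolding mm_def by (rule marg_fst[OF c Sm])
  have N: "nn y0 = (\<Sum>p\<in>{p. \<omega> p \<noteq> 0 \<and> \<phi> (snd p) = y0}. \<omega> p)"
    unfolding nn_def by (rule marg_snd[OF c Sn])
  have gen: "(\<Sum>p\<in>{p. \<omega> p \<noteq> 0 \<and> P p}. \<omega> p) - (\<Sum>p\<in>{p. \<omega> p \<noteq> 0 \<and> Q p}. \<omega> p) \<le> cost dphi \<omega>"
    if PQ: "\<And>p. P p \<Longrightarrow> \<not> Q p \<Longrightarrow> dphi (fst p) (snd p) = 1" for P Q
  proof -
    let ?A = "{p. \<omega> p \<noteq> 0 \<and> P p \<and> Q p}" and ?B = "{p. \<omega> p \<noteq> 0 \<and> P p \<and> \<not> Q p}"
    have fA: "finite ?A" "finite ?B" by (rule finite_subset[OF _ W], blast)+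
    have e: "{p. \<omega> p \<noteq> 0 \<and> P p} = ?A \<union> ?B" by blast
    have s1: "(\<Sum>p\<in>{p. \<omega> p \<noteq> 0 \<and> P p}. \<omega> p) = sum \<omega> ?A + sum \<omega> ?B"
      unfolding e by (rule sum.union_disjoint) (use fA in auto)
    have s2: "sum \<omega> ?A \<le> (\<Sum>p\<in>{p. \<omega> p \<noteq> 0 \<and> Q p}. \<omega> p)"
      by (rule sum_mono2) (use W onn in \<open>auto intro: finite_subset\<close>)
    have s3: "sum \<omega> ?B = (\<Sum>p\<in>?B. \<omega> p * dphi (fst p) (snd p))"
      by (rule sum.cong) (auto simp: PQ)
    have s4: "(\<Sum>p\<in>?B. \<omega> p * dphi (fst p) (snd p)) \<le> cost dphi \<omega>"
      unfolding cost_def by (rule sum_mono2) (use W onn dphi_nonneg in auto)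
    show ?thesis using s1 s2 s3 s4 by linarith
  qed
  show "mm y0 - nn y0 \<le> cost dphi \<omega>" unfolding M N by (rule gen) (auto simp: dphi_def)
  show "nn y0 - mm y0 \<le> cost dphi \<omega>" unfolding M N by (rule gen) (auto simp: dphi_def)
qed

lemma kant_zero_imp:
  assumes "kantorovich dphi \<mu> \<nu> = 0"
  shows "mm y = nn y"
proof -
  have ne: "{cost dphi \<omega> | \<omega>. is_coupling \<mu> \<nu> \<omega>} \<noteq> {}" using prod_coupling by auto
  have "mm y - nn y \<le> kantorovich dphi \<mu> \<nu>" "nn y - mm y \<le> kantorovich dphi \<mu> \<nu>"
    unfolding kantorovich_cost by (rule cInf_greatest[OF ne], use diff_le_cost in blast)+
  thus ?thesis using assms by linarith
qed

lemma mm_nonneg: "mm y \<ge> 0" unfolding mm_def by (rule sum_nonneg) (use mnn in auto)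

lemma mu_le_mm: "\<mu> x \<le> mm (\<phi> x)"
proof (cases "x \<in> Sm")
  case True thus ?thesis unfolding mm_def
    by (intro member_le_sum) (use Sm mnn in auto)
next
  case False thus ?thesis using Sm mm_nonneg by simp
qed

lemma nu_le_nn: "\<nu> x \<le> nn (\<phi> x)"
proof (cases "x \<in> Sn")
  case True thus ?thesis unfolding nn_def
    by (intro member_le_sum) (use Sn nnn in auto)
next
  case False thus ?thesis using Sn by (simp add: nn_def sum_nonneg nnn)
qed

lemma kant_zero_if:
  assumes eq: "\<And>y. mm y = nn y"
  shows "kantorovich dphi \<mu> \<nu> = 0"
proof -
  define \<omega> where "\<omega> p = (if \<phi> (fst p) = \<phi> (snd p) \<and> mm (\<phi> (fst p)) \<noteq> 0
      then \<mu> (fst p) * \<nu> (snd p) / mm (\<phi> (fst p)) else 0)" for p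
  have onn: "\<omega> p \<ge> 0" for p using mnn nnn mm_nonneg by (simp add: \<omega>_def)
  have fin: "finite {p. \<omega> p \<noteq> 0}"
    by (rule finite_subset[of _ "Sm \<times> Sn"]) (use Sm Sn in \<open>auto simp: \<omega>_def intro: smI snI split: if_splits\<close>)
  have a: "(\<Sum>y\<in>{y. \<omega> (x, y) \<noteq> 0}. \<omega> (x, y)) = \<mu> x" for x
  proof -
    have "(\<Sum>y\<in>{y. \<omega> (x, y) \<noteq> 0}. \<omega> (x, y)) = (\<Sum>y\<in>Sn. \<omega> (x, y))"
      by (rule sum_nonzero_eq[where g="\<lambda>y. \<omega> (x, y)"]) (use Sn in \<open>auto simp: \<omega>_def\<close>)
    also have "\<dots> = (\<Sum>y\<in>{y\<in>Sn. \<phi> x = \<phi> y \<and> mm (\<phi> x) \<noteq> 0}. \<mu> x * \<nu> y / mm (\<phi> x))"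
      unfolding \<omega>_def by (subst sum.inter_filter[OF Sn(1), symmetric]) (auto intro!: sum.cong)
    also have "\<dots> = \<mu> x"
    proof (cases "mm (\<phi> x) = 0")
      case True
      thus ?thesis using mu_le_mm[of x] mnn[of x] by simp
    next
      case False
      have "(\<Sum>y\<in>{y\<in>Sn. \<phi> x = \<phi> y \<and> mm (\<phi> x) \<noteq> 0}. \<mu> x * \<nu> y / mm (\<phi> x)) =
         \<mu> x / mm (\<phi> x) * (\<Sum>y\<in>{y\<in>Sn. \<phi> y = \<phi> x}. \<nu> y)"
        using False by (simp add: sum_distrib_left eq_commute[of "\<phi> x"] mult.commute)
      also have "\<dots> = \<mu> x" using False eq[of "\<phi> x"] by (simp add: nn_def)
      finally show ?thesis .
    qed
    finally show ?thesis .
  qed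
  have b: "(\<Sum>x\<in>{x. \<omega> (x, y) \<noteq> 0}. \<omega> (x, y)) = \<nu> y" for y
  proof -
    have "(\<Sum>x\<in>{x. \<omega> (x, y) \<noteq> 0}. \<omega> (x, y)) = (\<Sum>x\<in>Sm. \<omega> (x, y))"
      by (rule sum_nonzero_eq[where g="\<lambda>x. \<omega> (x, y)"]) (use Sm in \<open>auto simp: \<omega>_def\<close>)
    also have "\<dots> = (\<Sum>x\<in>{x\<in>Sm. \<phi> x = \<phi> y \<and> mm (\<phi> y) \<noteq> 0}. \<mu> x * \<nu> y / mm (\<phi> y))"
      unfolding \<omega>_def by (subst sum.inter_filter[OF Sm(1), symmetric]) (auto intro!: sum.cong)
    also have "\<dots> = \<nu> y"
    proof (cases "mm (\<phi> y) = 0")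
      case True
      thus ?thesis using nu_le_nn[of y] nnn[of y] eq[of "\<phi> y"] by simp
    next
      case False
      have "(\<Sum>x\<in>{x\<in>Sm. \<phi> x = \<phi> y \<and> mm (\<phi> y) \<noteq> 0}. \<mu> x * \<nu> y / mm (\<phi> y)) =
         \<nu> y / mm (\<phi> y) * (\<Sum>x\<in>{x\<in>Sm. \<phi> x = \<phi> y}. \<mu> x)"
        using False by (simp add: sum_distrib_left mult.commute)
      also have "\<dots> = \<nu> y" using False by (simp add: mm_def)
      finally show ?thesis .
    qed
    finally show ?thesis .
  qed
  have cpl: "is_coupling \<mu> \<nu> \<omega>" unfolding is_coupling_def using onn fin a b by blast
  have c0: "cost dphi \<omega> = 0" unfolding cost_def
    by (rule sum.neutral) (auto simp: \<omega>_def dphi_def split: if_splits)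
  have bdd: "bdd_below {cost dphi \<omega> | \<omega>. is_coupling \<mu> \<nu> \<omega>}"
    by (rule bdd_belowI[of _ 0]) (use cost_nonneg dphi_nonneg in blast)
  have "kantorovich dphi \<mu> \<nu> \<le> 0" unfolding kantorovich_cost
    by (rule cInf_lower2[OF _ _ bdd, of "cost dphi \<omega>"]) (use cpl c0 in auto)
  moreover have "kantorovich dphi \<mu> \<nu> \<ge> 0" by (rule kant_nonneg[OF dphi_nonneg])
  ultimately show ?thesis by linarith
qed

lemma kant_zero_iff: "kantorovich dphi \<mu> \<nu> = 0 \<longleftrightarrow> (\<forall>y. mm y = nn y)"
  using kant_zero_imp kant_zero_if by blast

lemma kant_phi: "kantorovich (\<lambda>x y. if \<phi> x = \<phi> y then 0 else 1) \<mu> \<nu> = 0 \<longleftrightarrow>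
   (\<forall>y. (\<Sum>x\<in>{x\<in>Sm. \<phi> x = y}. \<mu> x) = (\<Sum>x\<in>{x\<in>Sn. \<phi> x = y}. \<nu> x))"
proof -
  have "dphi = (\<lambda>x y. if \<phi> x = \<phi> y then 0 else 1)" by (intro ext) (simp add: dphi_def)
  thus ?thesis using kant_zero_iff unfolding mm_def nn_def by simp
qed

end
end


definition TDz :: "('z, 'a) trans \<Rightarrow> 'z \<Rightarrow> 'a act list \<Rightarrow> real" where
  "TDz R z \<alpha> = comps_prob {c \<in> Mx R z. tr c = \<alpha>}"
definition Vz :: "('z, 'a) trans \<Rightarrow> 'z \<Rightarrow> 'a list \<Rightarrow> real" where
  "Vz R z \<gamma> = comps_prob {c \<in> Mx R z. vis (tr c) = \<gamma>}"
definition TS :: "('z, 'a) trans \<Rightarrow> 'z \<Rightarrow> 'a act list set" where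
  "TS R z = tr ` Mx R z"
definition VS :: "('z, 'a) trans \<Rightarrow> 'z \<Rightarrow> 'a list set" where
  "VS R z = (\<lambda>c. vis (tr c)) ` Mx R z"

lemma group_sum:
  assumes "finite A"
  shows "comps_prob {c\<in>A. P (h c)} = (\<Sum>y\<in>{y\<in>h ` A. P y}. comps_prob {c\<in>A. h c = y})"
proof -
  have fS: "finite {c\<in>A. P (h c)}" using assms by simp
  have "comps_prob {c\<in>A. P (h c)} = (\<Sum>y\<in>h ` {c\<in>A. P (h c)}. sum comp_prob {x \<in> {c\<in>A. P (h c)}. h x = y})"
    unfolding comps_prob_def by (rule sum.image_gen[OF fS])
  also have "h ` {c\<in>A. P (h c)} = {y\<in>h ` A. P y}" by auto
  also have "(\<Sum>y\<in>{y\<in>h ` A. P y}. sum comp_prob {x \<in> {c\<in>A. P (h c)}. h x = y}) =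
             (\<Sum>y\<in>{y\<in>h ` A. P y}. comps_prob {c\<in>A. h c = y})"
    unfolding comps_prob_def by (rule sum.cong) (auto intro!: arg_cong[where f="sum comp_prob"])
  finally show ?thesis .
qed

lemma comps_prob_nonneg: "comps_prob C \<ge> 0"
  unfolding comps_prob_def by (rule sum_nonneg) (rule comp_prob_nonneg)

context detR begin

lemma G_V: "bounded R z n \<Longrightarrow> Gz z \<beta> = (\<Sum>\<gamma>\<in>{\<gamma>\<in>VS R z. prefix \<beta> \<gamma>}. Vz R z \<gamma>)"
  unfolding Gz_def Vz_def VS_def using group_sum[OF finite_Mx, of z n "prefix \<beta>" "\<lambda>c. vis (tr c)"]
  by simp

lemma V_TD: "bounded R z n \<Longrightarrow> Vz R z \<gamma> = (\<Sum>\<alpha>\<in>{\<alpha>\<in>TS R z. vis \<alpha> = \<gamma>}. TDz R z \<alpha>)"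
  unfolding TDz_def Vz_def TS_def using group_sum[OF finite_Mx, of z n "\<lambda>\<alpha>. vis \<alpha> = \<gamma>" tr]
  by simp

lemma TD_sum: "bounded R z n \<Longrightarrow> sum (TDz R z) (TS R z) = 1"
  using group_sum[OF finite_Mx, of z n "\<lambda>_. True" tr] total_Mx[of z n]
  unfolding TDz_def TS_def by simp

lemma finite_TS: "bounded R z n \<Longrightarrow> finite (TS R z)"
  unfolding TS_def using finite_Mx by blast

lemma finite_VS: "bounded R z n \<Longrightarrow> finite (VS R z)"
  unfolding VS_def using finite_Mx by blast

end

lemma TD_out: "\<alpha> \<notin> TS R z \<Longrightarrow> TDz R z \<alpha> = 0"
  unfolding TDz_def TS_def comps_prob_def by (auto intro!: sum.neutral)
lemma V_out: "\<gamma> \<notin> VS R z \<Longrightarrow> Vz R z \<gamma> = 0"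
  unfolding Vz_def VS_def comps_prob_def by (auto intro!: sum.neutral)
lemma TD_nonneg: "TDz R z \<alpha> \<ge> 0"
  unfolding TDz_def by (rule comps_prob_nonneg)

lemma cw_iff_V:
  assumes d1: "detR R1" and d2: "detR R2" and b1: "bounded R1 z1 n1" and b2: "bounded R2 z2 n2"
  shows "(\<forall>\<beta>. comps_prob (Cw R1 z1 \<beta>) = comps_prob (Cw R2 z2 \<beta>)) \<longleftrightarrow> (\<forall>\<gamma>. Vz R1 z1 \<gamma> = Vz R2 z2 \<gamma>)"
proof -
  let ?S = "VS R1 z1 \<union> VS R2 z2"
  have S: "finite ?S" using detR.finite_VS[OF d1 b1] detR.finite_VS[OF d2 b2] by simp
  have G1: "comps_prob (Cw R1 z1 \<beta>) = (\<Sum>\<gamma>\<in>{\<gamma>\<in>?S. prefix \<beta> \<gamma>}. Vz R1 z1 \<gamma>)" for \<beta>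
  proof -
    have "comps_prob (Cw R1 z1 \<beta>) = (\<Sum>\<gamma>\<in>{\<gamma>\<in>VS R1 z1. prefix \<beta> \<gamma>}. Vz R1 z1 \<gamma>)"
      using detR.Cw_eq_G[OF d1 b1] detR.G_V[OF d1 b1] by simp
    also have "\<dots> = (\<Sum>\<gamma>\<in>{\<gamma>\<in>?S. prefix \<beta> \<gamma>}. Vz R1 z1 \<gamma>)"
      by (rule sum.mono_neutral_left, rule finite_subset[OF _ S], blast, blast, blast intro: V_out)
    finally show ?thesis .
  qed
  have G2: "comps_prob (Cw R2 z2 \<beta>) = (\<Sum>\<gamma>\<in>{\<gamma>\<in>?S. prefix \<beta> \<gamma>}. Vz R2 z2 \<gamma>)" for \<beta>
  proof -
    have "comps_prob (Cw R2 z2 \<beta>) = (\<Sum>\<gamma>\<in>{\<gamma>\<in>VS R2 z2. prefix \<beta> \<gamma>}. Vz R2 z2 \<gamma>)"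
      using detR.Cw_eq_G[OF d2 b2] detR.G_V[OF d2 b2] by simp
    also have "\<dots> = (\<Sum>\<gamma>\<in>{\<gamma>\<in>?S. prefix \<beta> \<gamma>}. Vz R2 z2 \<gamma>)"
      by (rule sum.mono_neutral_left, rule finite_subset[OF _ S], blast, blast, blast intro: V_out)
    finally show ?thesis .
  qed
  have single: "(\<Sum>\<gamma>\<in>{\<gamma>\<in>?S. \<gamma> = \<beta>}. Vz R z \<gamma>) = Vz R z \<beta>"
    if "\<beta> \<notin> ?S \<Longrightarrow> Vz R z \<beta> = 0" for R z \<beta>
  proof (cases "\<beta> \<in> ?S")
    case True
    hence "{\<gamma>\<in>?S. \<gamma> = \<beta>} = {\<beta>}" by auto
    thus ?thesis by simp
  next
    case False
    hence "{\<gamma>\<in>?S. \<gamma> = \<beta>} = {}" by auto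
    thus ?thesis using that False by simp
  qed
  let ?L = "\<Union> (set ` ?S)"
  have L: "finite ?L" using S by auto
  show ?thesis
  proof
    assume eq: "\<forall>\<beta>. comps_prob (Cw R1 z1 \<beta>) = comps_prob (Cw R2 z2 \<beta>)"
    show "\<forall>\<gamma>. Vz R1 z1 \<gamma> = Vz R2 z2 \<gamma>"
    proof
      fix \<gamma>
      have "Vz R1 z1 \<gamma> = (\<Sum>\<gamma>'\<in>{\<gamma>'\<in>?S. \<gamma>' = \<gamma>}. Vz R1 z1 \<gamma>')"
        by (rule single[symmetric]) (use V_out in auto)
      also have "\<dots> = comps_prob (Cw R1 z1 \<gamma>) - (\<Sum>a\<in>?L. comps_prob (Cw R1 z1 (\<gamma> @ [a])))"
        unfolding G1 by (rule prefix_inv[OF S L]) auto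
      also have "\<dots> = comps_prob (Cw R2 z2 \<gamma>) - (\<Sum>a\<in>?L. comps_prob (Cw R2 z2 (\<gamma> @ [a])))"
        using eq by simp
      also have "\<dots> = (\<Sum>\<gamma>'\<in>{\<gamma>'\<in>?S. \<gamma>' = \<gamma>}. Vz R2 z2 \<gamma>')"
        unfolding G2 by (rule prefix_inv[OF S L, symmetric]) auto
      also have "\<dots> = Vz R2 z2 \<gamma>"
        by (rule single) (use V_out in auto)
      finally show "Vz R1 z1 \<gamma> = Vz R2 z2 \<gamma>" .
    qed
  next
    assume "\<forall>\<gamma>. Vz R1 z1 \<gamma> = Vz R2 z2 \<gamma>"
    thus "\<forall>\<beta>. comps_prob (Cw R1 z1 \<beta>) = comps_prob (Cw R2 z2 \<beta>)" unfolding G1 G2 by simp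
  qed
qed

lemma kant_V:
  assumes d1: "detR R1" and d2: "detR R2" and b1: "bounded R1 z1 n1" and b2: "bounded R2 z2 n2"
  shows "kantorovich d_w (TDz R1 z1) (TDz R2 z2) = 0 \<longleftrightarrow> (\<forall>\<gamma>. Vz R1 z1 \<gamma> = Vz R2 z2 \<gamma>)"
    and "kantorovich d_w (TDz R1 z1) (TDz R2 z2) \<ge> 0"
proof -
  interpret twodist "TDz R1 z1" "TDz R2 z2" "TS R1 z1" "TS R2 z2"
    by unfold_locales (use detR.finite_TS[OF d1 b1] detR.finite_TS[OF d2 b2] TD_out TD_nonneg
         detR.TD_sum[OF d1 b1] detR.TD_sum[OF d2 b2] in auto)
  have dw: "d_w = (\<lambda>x y. if vis x = vis y then 0 else 1)" by (intro ext) (simp add: d_w_def)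
  show "kantorovich d_w (TDz R1 z1) (TDz R2 z2) = 0 \<longleftrightarrow> (\<forall>\<gamma>. Vz R1 z1 \<gamma> = Vz R2 z2 \<gamma>)"
    unfolding dw kant_phi using detR.V_TD[OF d1 b1] detR.V_TD[OF d2 b2] by simp
  show "kantorovich d_w (TDz R1 z1) (TDz R2 z2) \<ge> 0"
    by (rule kant_nonneg) (simp add: d_w_def)
qed


definition shiftA :: "'a act \<Rightarrow> ('a act list \<Rightarrow> real) \<Rightarrow> 'a act list \<Rightarrow> real" where
  "shiftA a f \<alpha> = (case \<alpha> of [] \<Rightarrow> 0 | b # \<alpha>' \<Rightarrow> if b = a then f \<alpha>' else 0)"

definition leaf :: "'a act list \<Rightarrow> real" where
  "leaf \<alpha> = (if \<alpha> = [] then 1 else 0)"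

context detR begin

lemma TDz_notrans:
  assumes "\<And>a \<pi>. (z, a, \<pi>) \<notin> R"
  shows "TDz R z = leaf"
proof
  fix \<alpha>
  have e: "{c \<in> Mx R z. tr c = \<alpha>} = (if \<alpha> = [] then {[]} else {})"
    unfolding Mx_notrans[OF assms] by auto
  show "TDz R z \<alpha> = leaf \<alpha>"
    unfolding TDz_def e leaf_def comps_prob_def by (simp add: comp_prob_def)
qed

lemma TDz_trans:
  assumes tr: "(z, a, \<pi>) \<in> R" and b: "bounded R z n"
  shows "TDz R z \<alpha> = (\<Sum>z'\<in>set_pmf \<pi>. pmf \<pi> z' * shiftA a (TDz R z') \<alpha>)"
proof -
  have "TDz R z \<alpha> = (\<Sum>z'\<in>set_pmf \<pi>. pmf \<pi> z' * comps_prob {d \<in> Mx R z'. tr ((a, \<pi>, z') # d) = \<alpha>})"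
    unfolding TDz_def by (rule sum_Mx_trans[OF tr b])
  also have "\<dots> = (\<Sum>z'\<in>set_pmf \<pi>. pmf \<pi> z' * shiftA a (TDz R z') \<alpha>)"
  proof (rule sum.cong[OF refl])
    fix z'
    show "pmf \<pi> z' * comps_prob {d \<in> Mx R z'. tr ((a, \<pi>, z') # d) = \<alpha>} = pmf \<pi> z' * shiftA a (TDz R z') \<alpha>"
      by (cases \<alpha>) (auto simp: shiftA_def TDz_def comps_prob_def)
  qed
  finally show ?thesis .
qed

end

definition bnd :: "'s pmf \<Rightarrow> nat" where
  "bnd \<pi> = nat \<lceil>1 / Min (pmf \<pi> ` set_pmf \<pi>)\<rceil>"

fun Beh :: "('s, 'a) trans \<Rightarrow> nat \<Rightarrow> 's \<Rightarrow> ('a act list \<Rightarrow> real) set" where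
  "Beh T 0 u = {leaf}"
| "Beh T (Suc n) u = insert leaf (\<Union>(a, \<pi>)\<in>{(a, \<pi>). (u, a, \<pi>) \<in> T}.
      (\<lambda>ws \<alpha>. sum_list (map (\<lambda>(w, f). pmf \<pi> w * shiftA a f \<alpha>) ws)) `
        {ws. set ws \<subseteq> Sigma (set_pmf \<pi>) (Beh T n) \<and> length ws \<le> bnd \<pi>})"

lemma finite_Beh:
  assumes fs: "\<forall>(u, a, \<pi>) \<in> T. finite (set_pmf \<pi>)" and img: "\<forall>u. image_finite T u"
  shows "finite (Beh T n u)"
proof (induction n arbitrary: u)
  case 0 thus ?case by simp
next
  case (Suc n)
  have fi: "finite {(a, \<pi>). (u, a, \<pi>) \<in> T}" using img by (simp add: image_finite_def)
  have "finite ((\<lambda>ws \<alpha>. sum_list (map (\<lambda>(w, f). pmf \<pi> w * shiftA a f \<alpha>) ws)) `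
        {ws. set ws \<subseteq> Sigma (set_pmf \<pi>) (Beh T n) \<and> length ws \<le> bnd \<pi>})"
    if "(a, \<pi>) \<in> {(a, \<pi>). (u, a, \<pi>) \<in> T}" for a \<pi>
  proof -
    have "finite (set_pmf \<pi>)" using fs that by auto
    hence "finite (Sigma (set_pmf \<pi>) (Beh T n))" using Suc.IH by auto
    thus ?thesis by (intro finite_imageI finite_lists_length_le)
  qed
  thus ?case using fi by (simp only: Beh.simps finite_insert) (rule finite_UN_I; auto)
qed

lemma res_init: "is_resolution T s Z \<Longrightarrow> zinit Z \<in> zstates Z"
  unfolding is_resolution_def by (elim conjE) assumption
lemma res_cinit: "is_resolution T s Z \<Longrightarrow> zcorr Z (zinit Z) = s"
  unfolding is_resolution_def by (elim conjE) assumption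
lemma res_c3: "is_resolution T s Z \<Longrightarrow> \<forall>(z, a, \<pi>) \<in> ztrans Z. z \<in> zstates Z \<and> set_pmf \<pi> \<subseteq> zstates Z \<and> finite (set_pmf \<pi>)"
  unfolding is_resolution_def by (elim conjE) assumption
lemma res_c6: "is_resolution T s Z \<Longrightarrow> \<forall>(z, a, \<pi>) \<in> ztrans Z. \<exists>\<pi>'. (zcorr Z z, a, \<pi>') \<in> T \<and>
         (\<forall>z' \<in> zstates Z. pmf \<pi> z' = pmf \<pi>' (zcorr Z z'))"
  unfolding is_resolution_def by (elim conjE) assumption
lemma res_c7: "is_resolution T s Z \<Longrightarrow> \<forall>z a1 \<pi>1 a2 \<pi>2. (z, a1, \<pi>1) \<in> ztrans Z \<longrightarrow> (z, a2, \<pi>2) \<in> ztrans Z \<longrightarrow>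
         a1 = a2 \<and> \<pi>1 = \<pi>2"
  unfolding is_resolution_def by (elim conjE) assumption

lemma res_src: "is_resolution T s Z \<Longrightarrow> (z, a, \<pi>) \<in> ztrans Z \<Longrightarrow> z \<in> zstates Z"
  using res_c3 by fastforce
lemma res_supp: "is_resolution T s Z \<Longrightarrow> (z, a, \<pi>) \<in> ztrans Z \<Longrightarrow> set_pmf \<pi> \<subseteq> zstates Z"
  using res_c3 by fastforce
lemma res_fin: "is_resolution T s Z \<Longrightarrow> (z, a, \<pi>) \<in> ztrans Z \<Longrightarrow> finite (set_pmf \<pi>)"
  using res_c3 by fastforce
lemma res_match: "is_resolution T s Z \<Longrightarrow> (z, a, \<pi>) \<in> ztrans Z \<Longrightarrow>
   \<exists>\<pi>'. (zcorr Z z, a, \<pi>') \<in> T \<and> (\<forall>z' \<in> zstates Z. pmf \<pi> z' = pmf \<pi>' (zcorr Z z'))"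
  using res_c6 by fastforce

lemma res_det: "is_resolution T s Z \<Longrightarrow> detR (ztrans Z)"
  by unfold_locales (auto dest: res_fin res_c7)

lemma res_comp_map:
  assumes r: "is_resolution T s Z"
  shows "z \<in> zstates Z \<Longrightarrow> valid_comp (ztrans Z) z c \<Longrightarrow> \<exists>c'. valid_comp T (zcorr Z z) c' \<and> length c' = length c"
proof (induction c arbitrary: z)
  case Nil thus ?case by (intro exI[of _ "[]"]) simp
next
  case (Cons x c)
  obtain a \<pi> z' where x: "x = (a, \<pi>, z')" by (cases x) auto
  have tr: "(z, a, \<pi>) \<in> ztrans Z" and z': "z' \<in> set_pmf \<pi>" and vc: "valid_comp (ztrans Z) z' c"
    using Cons.prems x by auto
  have z'Z: "z' \<in> zstates Z" using res_supp[OF r tr] z' by blast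
  obtain \<pi>' where tr': "(zcorr Z z, a, \<pi>') \<in> T" and eq: "\<forall>w \<in> zstates Z. pmf \<pi> w = pmf \<pi>' (zcorr Z w)"
    using res_match[OF r tr] by blast
  have "pmf \<pi>' (zcorr Z z') = pmf \<pi> z'" using eq z'Z by simp
  hence "zcorr Z z' \<in> set_pmf \<pi>'" using z' by (simp add: set_pmf_iff)
  moreover obtain c' where "valid_comp T (zcorr Z z') c'" "length c' = length c"
    using Cons.IH[OF z'Z vc] by blast
  ultimately show ?case using tr' by (intro exI[of _ "(a, \<pi>', zcorr Z z') # c'"]) simp
qed

lemma res_bounded:
  assumes r: "is_resolution T s Z" and f: "finite_proc T s"
  shows "\<exists>N. bounded (ztrans Z) (zinit Z) N"
proof -
  obtain N where N: "\<forall>c\<in>comps T s. length c \<le> N" using f by (auto simp: finite_proc_def)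
  have i1: "zinit Z \<in> zstates Z" and i2: "zcorr Z (zinit Z) = s"
    using res_init[OF r] res_cinit[OF r] by blast+
  have "bounded (ztrans Z) (zinit Z) N"
    unfolding bounded_def
  proof
    fix c assume "c \<in> comps (ztrans Z) (zinit Z)"
    then obtain c' where "valid_comp T s c'" "length c' = length c"
      using res_comp_map[OF r i1, of c] i2 by (auto simp: comps_def)
    thus "length c \<le> N" using N by (auto simp: comps_def)
  qed
  thus ?thesis by blast
qed

lemma res_Beh:
  assumes r: "is_resolution T s Z" and fsT: "\<forall>(u, a, \<pi>) \<in> T. finite (set_pmf \<pi>)"
  shows "z \<in> zstates Z \<Longrightarrow> bounded (ztrans Z) z n \<Longrightarrow> TDz (ztrans Z) z \<in> Beh T n (zcorr Z z)"
proof (induction n arbitrary: z)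
  interpret detR "ztrans Z" by (rule res_det[OF r])
  case 0
  have "TDz (ztrans Z) z = leaf" by (rule TDz_notrans) (rule bounded_0[OF 0(2)])
  thus ?case by simp
next
  interpret detR "ztrans Z" by (rule res_det[OF r])
  case (Suc n)
  show ?case
  proof (cases "\<exists>a \<pi>. (z, a, \<pi>) \<in> ztrans Z")
    case False
    hence "TDz (ztrans Z) z = leaf" by (intro TDz_notrans) blast
    thus ?thesis by simp
  next
    case True
    then obtain a \<pi> where tr: "(z, a, \<pi>) \<in> ztrans Z" by auto
    obtain \<pi>' where tr': "(zcorr Z z, a, \<pi>') \<in> T" and eq: "\<forall>w \<in> zstates Z. pmf \<pi> w = pmf \<pi>' (zcorr Z w)"
      using res_match[OF r tr] by blast
    have supZ: "set_pmf \<pi> \<subseteq> zstates Z" using res_supp[OF r tr] .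
    have fpi: "finite (set_pmf \<pi>)" using fs[OF tr] .
    have fpi': "finite (set_pmf \<pi>')" using fsT tr' by auto
    obtain xs where xs: "set xs = set_pmf \<pi>" "distinct xs" using finite_distinct_list[OF fpi] by blast
    define ws where "ws = map (\<lambda>z'. (zcorr Z z', TDz (ztrans Z) z')) xs"
    have eqw: "pmf \<pi> z' = pmf \<pi>' (zcorr Z z')" if "z' \<in> set_pmf \<pi>" for z' using eq supZ that by blast
    have incl: "set ws \<subseteq> Sigma (set_pmf \<pi>') (Beh T n)"
    proof
      fix p assume "p \<in> set ws"
      then obtain z' where z': "z' \<in> set_pmf \<pi>" "p = (zcorr Z z', TDz (ztrans Z) z')"
        using xs by (auto simp: ws_def)
      have "zcorr Z z' \<in> set_pmf \<pi>'" using eqw[OF z'(1)] z'(1) by (simp add: set_pmf_iff)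
      moreover have "TDz (ztrans Z) z' \<in> Beh T n (zcorr Z z')"
        using Suc.IH supZ z'(1) bounded_Suc[OF Suc.prems(2) tr z'(1)] by blast
      ultimately show "p \<in> Sigma (set_pmf \<pi>') (Beh T n)" using z' by simp
    qed
    have len: "length ws \<le> bnd \<pi>'"
    proof -
      let ?m = "Min (pmf \<pi>' ` set_pmf \<pi>')"
      have mpos: "?m > 0" using fpi' set_pmf_not_empty[of \<pi>'] by (auto simp: set_pmf_eq')
      have "\<And>z'. z' \<in> set_pmf \<pi> \<Longrightarrow> ?m \<le> pmf \<pi> z'"
      proof -
        fix z' assume z': "z' \<in> set_pmf \<pi>"
        hence "zcorr Z z' \<in> set_pmf \<pi>'" using eqw[OF z'] by (simp add: set_pmf_iff)
        thus "?m \<le> pmf \<pi> z'" using eqw[OF z'] fpi' by (auto intro: Min_le)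
      qed
      hence "real (card (set_pmf \<pi>)) * ?m \<le> sum (pmf \<pi>) (set_pmf \<pi>)" by (rule sum_bounded_below)
      also have "\<dots> = 1" by (rule sum_pmf_eq_1) (use fpi in auto)
      finally have "real (card (set_pmf \<pi>)) \<le> 1 / ?m" using mpos by (simp add: field_simps)
      hence "real (card (set_pmf \<pi>)) \<le> real (bnd \<pi>')" unfolding bnd_def by linarith
      hence "card (set_pmf \<pi>) \<le> bnd \<pi>'" by linarith
      thus ?thesis using xs distinct_card[OF xs(2)] by (simp add: ws_def)
    qed
    have val: "TDz (ztrans Z) z = (\<lambda>\<alpha>. sum_list (map (\<lambda>(w, f). pmf \<pi>' w * shiftA a f \<alpha>) ws))"
    proof
      fix \<alpha>
      have "TDz (ztrans Z) z \<alpha> = (\<Sum>z'\<in>set_pmf \<pi>. pmf \<pi> z' * shiftA a (TDz (ztrans Z) z') \<alpha>)"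
        by (rule TDz_trans[OF tr Suc.prems(2)])
      also have "\<dots> = (\<Sum>z'\<in>set_pmf \<pi>. pmf \<pi>' (zcorr Z z') * shiftA a (TDz (ztrans Z) z') \<alpha>)"
        by (rule sum.cong) (simp_all add: eqw)
      also have "\<dots> = sum_list (map (\<lambda>z'. pmf \<pi>' (zcorr Z z') * shiftA a (TDz (ztrans Z) z') \<alpha>) xs)"
        unfolding xs(1)[symmetric] by (rule sum.distinct_set_conv_list[OF xs(2)])
      also have "\<dots> = sum_list (map (\<lambda>(w, f). pmf \<pi>' w * shiftA a f \<alpha>) ws)"
        by (simp add: ws_def comp_def)
      finally show "TDz (ztrans Z) z \<alpha> = sum_list (map (\<lambda>(w, f). pmf \<pi>' w * shiftA a f \<alpha>) ws)" .
    qed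
    show ?thesis unfolding Beh.simps
      using tr' incl len val by blast
  qed
qed

lemma TD_eq: "TD Z = TDz (ztrans Z) (zinit Z)"
  by (intro ext) (simp add: TD_def TDz_def Cmax_def Mx_def)

definition triv_res :: "'s \<Rightarrow> ('s, 'a) resolution" where
  "triv_res s = \<lparr>zstates = {0}, ztrans = {}, zcorr = (\<lambda>_. s), zinit = 0\<rparr>"

lemma triv_res: "triv_res s \<in> res T s"
  by (simp add: res_def is_resolution_def triv_res_def)


lemma fin_Inf:
  fixes A :: "real set"
  assumes "finite A" "A \<noteq> {}" "\<And>a. a \<in> A \<Longrightarrow> a \<ge> 0"
  shows "Inf A \<ge> 0" "Inf A = 0 \<longleftrightarrow> 0 \<in> A"
proof -
  have i: "Inf A = Min A" by (rule cInf_eq_Min[OF assms(1,2)])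
  have "Min A \<in> A" by (rule Min_in[OF assms(1,2)])
  thus "Inf A \<ge> 0" using i assms(3) by simp
  show "Inf A = 0 \<longleftrightarrow> 0 \<in> A"
  proof
    assume "Inf A = 0" thus "0 \<in> A" using i \<open>Min A \<in> A\<close> by simp
  next
    assume "0 \<in> A"
    hence "Min A \<le> 0" using assms(1) by simp
    thus "Inf A = 0" using i \<open>Min A \<in> A\<close> assms(3) by fastforce
  qed
qed

lemma fin_Sup:
  fixes A :: "real set"
  assumes "finite A" "A \<noteq> {}" "\<And>a. a \<in> A \<Longrightarrow> a \<ge> 0"
  shows "Sup A \<ge> 0" "Sup A = 0 \<longleftrightarrow> (\<forall>a\<in>A. a = 0)"
proof -
  have i: "Sup A = Max A" by (rule cSup_eq_Max[OF assms(1,2)])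
  have m: "Max A \<in> A" by (rule Max_in[OF assms(1,2)])
  thus "Sup A \<ge> 0" using i assms(3) by simp
  show "Sup A = 0 \<longleftrightarrow> (\<forall>a\<in>A. a = 0)"
  proof
    assume "Sup A = 0"
    thus "\<forall>a\<in>A. a = 0" using i assms Max_ge by fastforce
  next
    assume "\<forall>a\<in>A. a = 0" thus "Sup A = 0" using i m by simp
  qed
qed

lemma res_bounded_unif:
  assumes f: "finite_proc T t"
  shows "\<exists>N. \<forall>Z\<in>res T t. bounded (ztrans Z) (zinit Z) N"
proof -
  obtain N where N: "\<forall>c\<in>comps T t. length c \<le> N" using f by (auto simp: finite_proc_def)
  have "bounded (ztrans Z) (zinit Z) N" if Z: "Z \<in> res T t" for Z
    unfolding bounded_def
  proof
    have r: "is_resolution T t Z" using Z by (simp add: res_def)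
    fix c assume "c \<in> comps (ztrans Z) (zinit Z)"
    then obtain c' where "valid_comp T t c'" "length c' = length c"
      using res_comp_map[OF r res_init[OF r], of c] res_cinit[OF r] by (auto simp: comps_def)
    thus "length c \<le> N" using N by (auto simp: comps_def)
  qed
  thus ?thesis by blast
qed

lemma finite_TD_res:
  assumes fs: "\<forall>(u, a, \<pi>) \<in> T. finite (set_pmf \<pi>)" and img: "\<forall>u. image_finite T u"
    and f: "finite_proc T t"
  shows "finite (TD ` res T t)"
proof -
  obtain N where N: "\<forall>Z\<in>res T t. bounded (ztrans Z) (zinit Z) N" using res_bounded_unif[OF f] by blast
  have "TD ` res T t \<subseteq> Beh T N t"
  proof
    fix f assume "f \<in> TD ` res T t"
    then obtain Z where Z: "Z \<in> res T t" "f = TD Z" by blast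
    have r: "is_resolution T t Z" using Z by (simp add: res_def)
    have "TDz (ztrans Z) (zinit Z) \<in> Beh T N (zcorr Z (zinit Z))"
      by (rule res_Beh[OF r fs res_init[OF r]]) (use N Z in blast)
    thus "f \<in> Beh T N t" by (simp only: Z(2) TD_eq res_cinit[OF r])
  qed
  thus ?thesis using finite_Beh[OF fs img] finite_subset by blast
qed

lemma Dw_props:
  assumes Z1: "Z1 \<in> res T s" and Z2: "Z2 \<in> res T t" and fs: "finite_proc T s" and ft: "finite_proc T t"
  shows "D_w Z1 Z2 \<ge> 0"
    and "D_w Z1 Z2 = 0 \<longleftrightarrow> (\<forall>\<alpha>. comps_prob (Cw (ztrans Z1) (zinit Z1) \<alpha>) = comps_prob (Cw (ztrans Z2) (zinit Z2) \<alpha>))"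
proof -
  have r1: "is_resolution T s Z1" and r2: "is_resolution T t Z2" using Z1 Z2 by (simp_all add: res_def)
  obtain n1 where b1: "bounded (ztrans Z1) (zinit Z1) n1" using res_bounded[OF r1 fs] by blast
  obtain n2 where b2: "bounded (ztrans Z2) (zinit Z2) n2" using res_bounded[OF r2 ft] by blast
  note K = kant_V[OF res_det[OF r1] res_det[OF r2] b1 b2]
  show "D_w Z1 Z2 \<ge> 0" unfolding D_w_def TD_eq using K(2) .
  show "D_w Z1 Z2 = 0 \<longleftrightarrow> (\<forall>\<alpha>. comps_prob (Cw (ztrans Z1) (zinit Z1) \<alpha>) = comps_prob (Cw (ztrans Z2) (zinit Z2) \<alpha>))"
    unfolding D_w_def TD_eq K(1) cw_iff_V[OF res_det[OF r1] res_det[OF r2] b1 b2] ..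
qed

lemma Inf_part:
  assumes fsT: "\<forall>(u, a, \<pi>) \<in> T. finite (set_pmf \<pi>)" and img: "\<forall>u. image_finite T u"
    and fs: "finite_proc T s" and ft: "finite_proc T t" and Z: "Z \<in> res T s"
  shows "(INF y\<in>res T t. D_w Z y) \<ge> 0"
    and "(INF y\<in>res T t. D_w Z y) = 0 \<longleftrightarrow> (\<exists>y\<in>res T t. D_w Z y = 0)"
proof -
  have eq: "D_w Z ` res T t = (\<lambda>f. kantorovich d_w (TD Z) f) ` (TD ` res T t)"
    by (auto simp: D_w_def image_image)
  have fin: "finite (D_w Z ` res T t)" unfolding eq using finite_TD_res[OF fsT img ft] by blast
  have ne: "D_w Z ` res T t \<noteq> {}" using triv_res[of t T] by blast
  have nn: "\<And>a. a \<in> D_w Z ` res T t \<Longrightarrow> a \<ge> 0" using Dw_props(1)[OF Z _ fs ft] by blast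
  show "(INF y\<in>res T t. D_w Z y) \<ge> 0" using fin_Inf(1)[OF fin ne nn] .
  show "(INF y\<in>res T t. D_w Z y) = 0 \<longleftrightarrow> (\<exists>y\<in>res T t. D_w Z y = 0)"
    using fin_Inf(2)[OF fin ne nn] by (metis (mono_tags, lifting) image_iff)
qed

lemma Sup_part:
  assumes fsT: "\<forall>(u, a, \<pi>) \<in> T. finite (set_pmf \<pi>)" and img: "\<forall>u. image_finite T u"
    and fs: "finite_proc T s" and ft: "finite_proc T t"
  shows "(SUP x\<in>res T s. INF y\<in>res T t. D_w x y) \<ge> 0"
    and "(SUP x\<in>res T s. INF y\<in>res T t. D_w x y) = 0 \<longleftrightarrow>
        (\<forall>x\<in>res T s. \<exists>y\<in>res T t. D_w x y = 0)"
proof -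
  let ?I = "\<lambda>x. INF y\<in>res T t. D_w x y"
  have eq: "?I ` res T s = (\<lambda>f. Inf ((\<lambda>g. kantorovich d_w f g) ` (TD ` res T t))) ` (TD ` res T s)"
    by (auto simp: D_w_def image_image)
  have fin: "finite (?I ` res T s)" unfolding eq using finite_TD_res[OF fsT img fs] by blast
  have ne: "?I ` res T s \<noteq> {}" using triv_res[of s T] by blast
  have nn: "\<And>a. a \<in> ?I ` res T s \<Longrightarrow> a \<ge> 0" using Inf_part(1)[OF fsT img fs ft] by blast
  show "(SUP x\<in>res T s. INF y\<in>res T t. D_w x y) \<ge> 0" using fin_Sup(1)[OF fin ne nn] .
  show "(SUP x\<in>res T s. INF y\<in>res T t. D_w x y) = 0 \<longleftrightarrow> (\<forall>x\<in>res T s. \<exists>y\<in>res T t. D_w x y = 0)"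
    using fin_Sup(2)[OF fin ne nn] Inf_part(2)[OF fsT img fs ft] by auto
qed

theorem proposition5:
  fixes T :: "('s::countable, 'a) trans" and s t :: 's
  assumes finite_supp: "\<forall>(u, a, \<pi>) \<in> T. finite (set_pmf \<pi>)"
    and img_fin: "\<forall>u. image_finite T u"
    and fin: "\<forall>u. finite_proc T u"
  shows "weak_trace_metric T s t = 0 \<longleftrightarrow> weak_trace_equiv T s t"
proof -
  have fs: "finite_proc T s" and ft: "finite_proc T t" using fin by auto
  have ne: "res T s \<noteq> {}" "res T t \<noteq> {}" using triv_res[of s T] triv_res[of t T] by blast+
  have m: "weak_trace_metric T s t = max (SUP x\<in>res T s. INF y\<in>res T t. D_w x y) (SUP y\<in>res T t. INF x\<in>res T s. D_w y x)"
    unfolding weak_trace_metric_def hausdorff_def using ne by simp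
  note S1 = Sup_part[OF finite_supp img_fin fs ft]
  note S2 = Sup_part[OF finite_supp img_fin ft fs]
  have "weak_trace_metric T s t = 0 \<longleftrightarrow>
     (\<forall>x\<in>res T s. \<exists>y\<in>res T t. D_w x y = 0) \<and> (\<forall>y\<in>res T t. \<exists>x\<in>res T s. D_w y x = 0)"
    unfolding m using S1 S2 by (smt (verit))
  also have "\<dots> \<longleftrightarrow> weak_trace_equiv T s t"
    unfolding weak_trace_equiv_def using Dw_props(2)[OF _ _ fs ft] Dw_props(2)[OF _ _ ft fs] by meson
  finally show ?thesis .
qed


end
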